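(* Let $G$ be a (not necessarily strongly connected) directed network on node set $\mathcal{V}$, and let $G^o$ be the extended network. Let $F^{\{o\}}=(I-P_{\mathcal{V}\mathcal{V}})^{-1}$, where $P$ is the transition matrix of $G^o$. Then: (i) for all $s,t\in\mathcal{V}$, $F^{\{o\}}_{st}\neq 0$ if and only if $t$ is reachable from $s$ in $G$. (ii) Let $\mathcal{F}\subseteq\mathcal{V}$ be a nonempty set of failed nodes and $\mathcal{S}=\mathcal{F}\cup\{o\}$; then $F^{\{o\}}_{\mathcal{F}\mathcal{F}}$ is invertible, and for $s,t\in\mathcal{V}\setminus\mathcal{F}$ the quantity $$\boldsymbol{F}_{st\mathcal{S}}=F^{\{o\}}_{st}-F^{\{o\}}_{s\mathcal{F}}\big(F^{\{o\}}_{\mathcal{F}\mathcal{F}}\big)^{-1}F^{\{o\}}_{\mathcal{F}t}$$ is nonzero if and only if $t$ is reachable from $s$ in the network obtained from $G$ by deleting the nodes of $\mathcal{F}$.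
   Context: $G$ has a nonnegative affinity matrix $A$ ($a_{ij}>0$ iff there is an edge from $i$ to $j$). The extended network $G^o$ is obtained by adding a new node $o$ and an edge of positive weight from every node of $\mathcal{V}$ to $o$; the random walk on $G^o$ has transition matrix $P=D^{-1}A^o$ (row-normalized affinity of $G^o$), and $o$ is treated as the target (absorbing) node. $P_{\mathcal{V}\mathcal{V}}$ is the submatrix of $P$ on rows and columns $\mathcal{V}$, so $F^{\{o\}}_{st}$ is the expected number of visits to $t$ before hitting $o$ for the walk started at $s$. $F^{\{o\}}_{s\mathcal{F}}$, $F^{\{o\}}_{\mathcal{F}\mathcal{F}}$, $F^{\{o\}}_{\mathcal{F}t}$ denote the corresponding row vector, submatrix and column vector. A node $t$ is reachable from $s$ if there is a directed path from $s$ to $t$ (each node being reachable from itself). *)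

theory Defs
  imports "Jordan_Normal_Form.Matrix" "Jordan_Normal_Form.DL_Submatrix"
begin

text \<open>Nodes of G are 0..<n; A is the n x n nonnegative affinity matrix of G;
  w i > 0 is the weight of the edge from node i to the extra node o.
  trans_VV A w is the submatrix P_VV of the row-normalised transition matrix of G^o.\<close>

definition trans_VV :: "real mat \<Rightarrow> (nat \<Rightarrow> real) \<Rightarrow> real mat" where
  "trans_VV A w = mat (dim_row A) (dim_row A)
     (\<lambda>(i,j). A $$ (i,j) / ((\<Sum>k<dim_row A. A $$ (i,k)) + w i))"

definition edges :: "real mat \<Rightarrow> (nat \<times> nat) set" where
  "edges A = {(i,j). i < dim_row A \<and> j < dim_row A \<and> A $$ (i,j) > 0}"

definition reachable :: "real mat \<Rightarrow> nat \<Rightarrow> nat \<Rightarrow> bool" where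
  "reachable A s t \<longleftrightarrow> (s,t) \<in> (edges A)\<^sup>*"

definition reachable_del :: "real mat \<Rightarrow> nat set \<Rightarrow> nat \<Rightarrow> nat \<Rightarrow> bool" where
  "reachable_del A Fs s t \<longleftrightarrow> (s,t) \<in> {(i,j) \<in> edges A. i \<notin> Fs \<and> j \<notin> Fs}\<^sup>*"

definition is_inverse_mat :: "real mat \<Rightarrow> real mat \<Rightarrow> bool" where
  "is_inverse_mat X Y \<longleftrightarrow> Y \<in> carrier_mat (dim_row X) (dim_row X) \<and> X * Y = 1\<^sub>m (dim_row X) \<and> Y * X = 1\<^sub>m (dim_row X)"

end

theory Submission
  imports Defs "Jordan_Normal_Form.Determinant"
begin


lemma mult_idx:
  fixes X Y :: "'a::comm_ring_1 mat"
  assumes "X \<in> carrier_mat a b" "Y \<in> carrier_mat b c" "i < a" "j < c"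
  shows "(X * Y) $$ (i,j) = (\<Sum>k<b. X $$ (i,k) * Y $$ (k,j))"
  using assms by (auto simp: scalar_prod_def atLeast0LessThan intro!: sum.cong)

lemma multv_idx:
  fixes X :: "'a::comm_ring_1 mat"
  assumes "X \<in> carrier_mat a b" "v \<in> carrier_vec b" "i < a"
  shows "(X *\<^sub>v v) $ i = (\<Sum>k<b. X $$ (i,k) * v $ k)"
  using assms by (auto simp: scalar_prod_def atLeast0LessThan intro!: sum.cong)

lemma minprinc:
  fixes V :: "nat set" and P :: "nat \<Rightarrow> nat \<Rightarrow> real" and x c :: "nat \<Rightarrow> real"
  assumes fin: "finite V" and nn: "\<forall>i\<in>V. \<forall>j\<in>V. P i j \<ge> 0"
    and rs: "\<forall>i\<in>V. (\<Sum>j\<in>V. P i j) < 1"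
    and c: "\<forall>i\<in>V. c i \<ge> 0"
    and eq: "\<forall>i\<in>V. x i = c i + (\<Sum>j\<in>V. P i j * x j)"
  shows "\<forall>i\<in>V. x i \<ge> 0"
proof (cases "V = {}")
  case True then show ?thesis by simp
next
  case False
  define m where "m = Min (x ` V)"
  have mle: "\<And>j. j \<in> V \<Longrightarrow> m \<le> x j" unfolding m_def using fin by simp
  obtain i where i: "i \<in> V" "x i = m" unfolding m_def using fin False
    by (metis (mono_tags, lifting) Min_in empty_is_image finite_imageI imageE)
  have "m \<ge> 0"
  proof (rule ccontr)
    assume neg: "\<not> m \<ge> 0"
    have "(\<Sum>j\<in>V. P i j * m) \<le> (\<Sum>j\<in>V. P i j * x j)"
      using nn i mle by (intro sum_mono mult_left_mono) auto
    moreover have "(\<Sum>j\<in>V. P i j * m) = (\<Sum>j\<in>V. P i j) * m" by (simp add: sum_distrib_right)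
    moreover have "(\<Sum>j\<in>V. P i j) * m > m"
    proof -
      have "(1 - (\<Sum>j\<in>V. P i j)) * m < 0" using rs i neg by (intro mult_pos_neg) auto
      then show ?thesis by (simp add: algebra_simps)
    qed
    ultimately have "x i > m" using eq c i by fastforce
    with i show False by simp
  qed
  then show ?thesis using mle by fastforce
qed

lemma homprinc:
  fixes V :: "nat set" and P :: "nat \<Rightarrow> nat \<Rightarrow> real" and x :: "nat \<Rightarrow> real"
  assumes fin: "finite V" and nn: "\<forall>i\<in>V. \<forall>j\<in>V. P i j \<ge> 0"
    and rs: "\<forall>i\<in>V. (\<Sum>j\<in>V. P i j) < 1"
    and eq: "\<forall>i\<in>V. x i = (\<Sum>j\<in>V. P i j * x j)"
  shows "\<forall>i\<in>V. x i = 0"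
proof -
  have a: "\<forall>i\<in>V. x i \<ge> 0" using minprinc[OF fin nn rs, of "\<lambda>_. 0" x] eq by simp
  have "\<forall>i\<in>V. - x i \<ge> 0" using minprinc[OF fin nn rs, of "\<lambda>_. 0" "\<lambda>i. - x i"] eq
    by (simp add: sum_negf)
  with a show ?thesis by force
qed

lemma reachlem:
  fixes V :: "nat set" and P :: "nat \<Rightarrow> nat \<Rightarrow> real" and x :: "nat \<Rightarrow> real"
  assumes fin: "finite V" and nn: "\<forall>i\<in>V. \<forall>j\<in>V. P i j \<ge> 0"
    and rs: "\<forall>i\<in>V. (\<Sum>j\<in>V. P i j) < 1"
    and t: "t \<in> V"
    and eq: "\<forall>i\<in>V. x i = (if i = t then 1 else 0) + (\<Sum>j\<in>V. P i j * x j)"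
  shows "\<forall>s\<in>V. x s \<noteq> 0 \<longleftrightarrow> (s,t) \<in> {(i,j). i\<in>V \<and> j\<in>V \<and> P i j > 0}\<^sup>*"
proof -
  let ?E = "{(i,j). i\<in>V \<and> j\<in>V \<and> P i j > 0}"
  have pos: "\<forall>i\<in>V. x i \<ge> 0" using minprinc[OF fin nn rs, of "\<lambda>i. if i = t then 1 else 0" x] eq by simp
  have sumnn: "\<And>i. i \<in> V \<Longrightarrow> (\<Sum>j\<in>V. P i j * x j) \<ge> 0"
    using nn pos by (intro sum_nonneg) auto
  have fwd: "s \<in> V \<Longrightarrow> x s > 0" if "(s,t) \<in> ?E\<^sup>*" for s
    using that
  proof (induction rule: converse_rtrancl_induct)
    case base
    then show ?case using eq sumnn[OF t] t by fastforce
  next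
    case (step s k)
    then have sk: "s \<in> V" "k \<in> V" "P s k > 0" by auto
    with step have xk: "x k > 0" by auto
    have "P s k * x k \<le> (\<Sum>j\<in>V. P s j * x j)"
      using nn pos sk fin by (intro member_le_sum) auto
    moreover have "P s k * x k > 0" using sk xk by simp
    moreover have "x s = (if s = t then 1 else 0) + (\<Sum>j\<in>V. P s j * x j)" using eq sk by blast
    ultimately show ?case by (smt (verit))
  qed
  define R where "R = {s\<in>V. (s,t) \<notin> ?E\<^sup>*}"
  have RV: "R \<subseteq> V" unfolding R_def by auto
  have finR: "finite R" using fin RV finite_subset by blast
  have eqR: "\<forall>i\<in>R. x i = (\<Sum>j\<in>R. P i j * x j)"
  proof
    fix i assume iR: "i \<in> R"
    then have iV: "i \<in> V" and nt: "i \<noteq> t" unfolding R_def by auto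
    have z: "\<forall>j\<in>V - R. P i j * x j = 0"
    proof
      fix j assume j: "j \<in> V - R"
      then have "(j,t) \<in> ?E\<^sup>*" unfolding R_def by auto
      moreover have "P i j > 0 \<Longrightarrow> (i,j) \<in> ?E" using iV j by auto
      ultimately have "\<not> P i j > 0" using iR unfolding R_def
        by (metis (no_types, lifting) converse_rtrancl_into_rtrancl mem_Collect_eq)
      then show "P i j * x j = 0" using nn iV j by force
    qed
    have "(\<Sum>j\<in>V. P i j * x j) = (\<Sum>j\<in>R. P i j * x j)"
      using z RV fin by (intro sum.mono_neutral_right) auto
    then show "x i = (\<Sum>j\<in>R. P i j * x j)" using eq iV nt by simp
  qed
  have rsR: "\<forall>i\<in>R. (\<Sum>j\<in>R. P i j) < 1"
  proof
    fix i assume "i \<in> R"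
    then have iV: "i \<in> V" using RV by auto
    have "(\<Sum>j\<in>R. P i j) \<le> (\<Sum>j\<in>V. P i j)"
      using nn iV RV fin by (intro sum_mono2) auto
    then show "(\<Sum>j\<in>R. P i j) < 1" using rs iV by force
  qed
  have "\<forall>i\<in>R. x i = 0"
    by (rule homprinc[OF finR _ rsR eqR]) (use nn RV in auto)
  then show ?thesis using fwd unfolding R_def by force
qed



lemma det_ne0_invertible:
  fixes X :: "real mat"
  assumes X: "X \<in> carrier_mat m m"
    and ker: "\<And>v. v \<in> carrier_vec m \<Longrightarrow> X *\<^sub>v v = 0\<^sub>v m \<Longrightarrow> v = 0\<^sub>v m"
  shows "invertible_mat X"
proof -
  have "det X \<noteq> 0" using det_0_iff_vec_prod_zero_field[OF X] ker by blast
  from det_non_zero_imp_unit[OF X this, of "()"]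
  obtain Y where Y: "Y \<in> carrier_mat m m" "Y * X = 1\<^sub>m m" "X * Y = 1\<^sub>m m"
    unfolding Units_def ring_mat_def by auto
  show ?thesis unfolding invertible_mat_def inverts_mat_def using X Y
    by (intro conjI exI[of _ Y]) auto
qed

lemma pick_bij:
  assumes "finite S"
  shows "bij_betw (pick S) {..<card S} S"
proof -
  have "inj_on (pick S) {..<card S}"
  proof (rule inj_onI)
    fix x y assume x: "x \<in> {..<card S}" and y: "y \<in> {..<card S}" and e: "pick S x = pick S y"
    show "x = y"
    proof (rule ccontr)
      assume "x \<noteq> y"
      then consider "x < y" | "y < x" by linarith
      then show False
      proof cases
        case 1 then have "pick S x < pick S y" using y by (intro pick_mono) auto
        then show False using e by simp
      next
        case 2 then have "pick S y < pick S x" using x by (intro pick_mono) auto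
        then show False using e by simp
      qed
    qed
  qed
  moreover have "pick S ` {..<card S} \<subseteq> S" using pick_in_set by auto
  moreover have "S \<subseteq> pick S ` {..<card S}"
  proof
    fix a assume a: "a \<in> S"
    have "{b\<in>S. b < a} \<subset> S" using a by auto
    then have "card {b\<in>S. b < a} < card S" using assms by (simp add: psubset_card_mono)
    then show "a \<in> pick S ` {..<card S}"
      by (intro image_eqI[where x="card {b\<in>S. b < a}"]) (simp_all add: pick_card_in_set[OF a])
  qed
  ultimately show ?thesis unfolding bij_betw_def by blast
qed

lemma triple_swap:
  fixes c :: "nat \<Rightarrow> real"
  shows "(\<Sum>l\<in>L. c l * (\<Sum>i\<in>I. \<Sum>j\<in>J. f l i * g i j)) = (\<Sum>i\<in>I. \<Sum>j\<in>J. (\<Sum>l\<in>L. c l * f l i) * g i j)"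
proof -
  have "(\<Sum>l\<in>L. c l * (\<Sum>i\<in>I. \<Sum>j\<in>J. f l i * g i j)) = (\<Sum>l\<in>L. \<Sum>i\<in>I. \<Sum>j\<in>J. c l * f l i * g i j)"
    by (simp add: sum_distrib_left mult.assoc)
  also have "\<dots> = (\<Sum>i\<in>I. \<Sum>l\<in>L. \<Sum>j\<in>J. c l * f l i * g i j)" by (rule sum.swap)
  also have "\<dots> = (\<Sum>i\<in>I. \<Sum>j\<in>J. \<Sum>l\<in>L. c l * f l i * g i j)" by (intro sum.cong refl sum.swap)
  also have "\<dots> = (\<Sum>i\<in>I. \<Sum>j\<in>J. (\<Sum>l\<in>L. c l * f l i) * g i j)" by (simp add: sum_distrib_right)
  finally show ?thesis .
qed

lemma double_swap:
  fixes a :: "nat \<Rightarrow> real"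
  shows "(\<Sum>i\<in>I. \<Sum>j\<in>J. a i * b i j * d j) = (\<Sum>j\<in>J. (\<Sum>i\<in>I. a i * b i j) * d j)"
  by (simp add: sum_distrib_right) (rule sum.swap)



theorem mainTheorem18:
  fixes A :: "real mat" and w :: "nat \<Rightarrow> real" and n :: nat
  assumes "A \<in> carrier_mat n n"
    and "\<forall>i<n. \<forall>j<n. A $$ (i,j) \<ge> 0"
    and "\<forall>i<n. w i > 0"
  shows "invertible_mat (1\<^sub>m n - trans_VV A w) \<and>
    (\<forall>F. is_inverse_mat (1\<^sub>m n - trans_VV A w) F \<longrightarrow>
      (\<forall>s<n. \<forall>t<n. F $$ (s,t) \<noteq> 0 \<longleftrightarrow> reachable A s t) \<and>
      (\<forall>Fs. Fs \<subseteq> {..<n} \<and> Fs \<noteq> {} \<longrightarrow>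
         invertible_mat (submatrix F Fs Fs) \<and>
         (\<forall>B. is_inverse_mat (submatrix F Fs Fs) B \<longrightarrow>
           (\<forall>s<n. \<forall>t<n. s \<notin> Fs \<longrightarrow> t \<notin> Fs \<longrightarrow>
              ((F $$ (s,t) - (submatrix F {s} Fs * B * submatrix F Fs {t}) $$ (0,0) \<noteq> 0)
               \<longleftrightarrow> reachable_del A Fs s t)))))"
proof -
  let ?P = "trans_VV A w"
  let ?M = "1\<^sub>m n - ?P"
  have dA: "dim_row A = n" using assms(1) by auto
  define D where "D i = (\<Sum>k<n. A $$ (i,k)) + w i" for i
  define p where "p i j = A $$ (i,j) / D i" for i j
  have sA: "i < n \<Longrightarrow> (\<Sum>k<n. A $$ (i,k)) \<ge> 0" for i using assms(2) by (intro sum_nonneg) auto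
  have Dpos: "i < n \<Longrightarrow> D i > 0" for i unfolding D_def using sA[of i] assms(3) by force
  have Pcar: "?P \<in> carrier_mat n n" unfolding trans_VV_def dA by simp
  have Pidx: "i < n \<Longrightarrow> j < n \<Longrightarrow> ?P $$ (i,j) = p i j" for i j
    unfolding trans_VV_def p_def D_def dA by simp
  have Mcar: "?M \<in> carrier_mat n n" using Pcar by (rule minus_carrier_mat)
  have Midx: "i < n \<Longrightarrow> j < n \<Longrightarrow> ?M $$ (i,j) = (if i = j then 1 else 0) - p i j" for i j
    using Pcar Pidx by (simp add: carrier_matD)
  have pnn: "\<forall>i\<in>{..<n}. \<forall>j\<in>{..<n}. p i j \<ge> 0"
    unfolding p_def using assms(2) Dpos by (auto intro!: divide_nonneg_pos)
  have ppos: "i < n \<Longrightarrow> j < n \<Longrightarrow> p i j > 0 \<longleftrightarrow> A $$ (i,j) > 0" for i j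
    unfolding p_def using Dpos[of i] by (simp add: zero_less_divide_iff)
  have prs: "\<forall>i\<in>{..<n}. (\<Sum>j\<in>{..<n}. p i j) < 1"
  proof
    fix i assume "i \<in> {..<n}"
    then have i: "i < n" by simp
    have "(\<Sum>j\<in>{..<n}. p i j) = (\<Sum>k<n. A $$ (i,k)) / D i"
      unfolding p_def by (simp add: sum_divide_distrib)
    also have "\<dots> < 1" using Dpos[OF i] assms(3) i unfolding D_def by simp
    finally show "(\<Sum>j\<in>{..<n}. p i j) < 1" .
  qed
  have Mv: "(?M *\<^sub>v v) $ i = v $ i - (\<Sum>j<n. p i j * v $ j)" if v: "v \<in> carrier_vec n" and i: "i < n" for v i
  proof -
    have "(?M *\<^sub>v v) $ i = (\<Sum>j<n. ((if i = j then 1 else 0) - p i j) * v $ j)"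
      using multv_idx[OF Mcar v i] Midx i by simp
    also have "\<dots> = (\<Sum>j<n. (if i = j then v $ j else 0) - p i j * v $ j)"
      by (intro sum.cong) (auto simp: left_diff_distrib)
    also have "\<dots> = (\<Sum>j<n. (if i = j then v $ j else 0)) - (\<Sum>j<n. p i j * v $ j)"
      by (rule sum_subtractf)
    also have "\<dots> = v $ i - (\<Sum>j<n. p i j * v $ j)" using i by simp
    finally show ?thesis .
  qed
  have inv: "invertible_mat ?M"
  proof (rule det_ne0_invertible[OF Mcar])
    fix v :: "real vec" assume v: "v \<in> carrier_vec n" and z: "?M *\<^sub>v v = 0\<^sub>v n"
    have "\<forall>i\<in>{..<n}. v $ i = (\<Sum>j\<in>{..<n}. p i j * v $ j)"
    proof
      fix i assume "i \<in> {..<n}"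
      then have i: "i < n" by simp
      have "(?M *\<^sub>v v) $ i = 0" using z i by simp
      then show "v $ i = (\<Sum>j\<in>{..<n}. p i j * v $ j)" using Mv[OF v i] by simp
    qed
    then have "\<forall>i\<in>{..<n}. v $ i = 0" by (intro homprinc[OF _ pnn prs]) auto
    then show "v = 0\<^sub>v n" using v by (intro eq_vecI) auto
  qed
  have part: "(\<forall>s<n. \<forall>t<n. F $$ (s,t) \<noteq> 0 \<longleftrightarrow> reachable A s t) \<and>
      (\<forall>Fs. Fs \<subseteq> {..<n} \<and> Fs \<noteq> {} \<longrightarrow>
         invertible_mat (submatrix F Fs Fs) \<and>
         (\<forall>B. is_inverse_mat (submatrix F Fs Fs) B \<longrightarrow>
           (\<forall>s<n. \<forall>t<n. s \<notin> Fs \<longrightarrow> t \<notin> Fs \<longrightarrow>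
              ((F $$ (s,t) - (submatrix F {s} Fs * B * submatrix F Fs {t}) $$ (0,0) \<noteq> 0)
               \<longleftrightarrow> reachable_del A Fs s t))))"
    if F: "is_inverse_mat ?M F" for F
  proof -
    have dM: "dim_row ?M = n" using Mcar by auto
    have Fcar: "F \<in> carrier_mat n n" and MF: "?M * F = 1\<^sub>m n"
      using F unfolding is_inverse_mat_def dM by auto
    have Feq: "F $$ (s,t) = (if s = t then 1 else 0) + (\<Sum>k<n. p s k * F $$ (k,t))"
      if st: "s < n" "t < n" for s t
    proof -
      have "(?M * F) $$ (s,t) = (\<Sum>k<n. ?M $$ (s,k) * F $$ (k,t))" by (rule mult_idx[OF Mcar Fcar st])
      also have "\<dots> = (\<Sum>k<n. (if s = k then F $$ (k,t) else 0) - p s k * F $$ (k,t))"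
        using st Midx by (intro sum.cong) (auto simp: left_diff_distrib)
      also have "\<dots> = (\<Sum>k<n. (if s = k then F $$ (k,t) else 0)) - (\<Sum>k<n. p s k * F $$ (k,t))"
        by (rule sum_subtractf)
      also have "\<dots> = F $$ (s,t) - (\<Sum>k<n. p s k * F $$ (k,t))" using st by simp
      finally show ?thesis using MF st by simp
    qed
    have Eq: "{(i,j). i \<in> {..<n} \<and> j \<in> {..<n} \<and> p i j > 0} = edges A"
      unfolding edges_def dA using ppos by auto
    have P1: "\<forall>s<n. \<forall>t<n. F $$ (s,t) \<noteq> 0 \<longleftrightarrow> reachable A s t"
    proof (intro allI impI)
      fix s t assume s: "s < n" and t: "t < n"
      have "\<forall>s\<in>{..<n}. (F $$ (s,t) \<noteq> 0) \<longleftrightarrow> (s,t) \<in> {(i,j). i \<in> {..<n} \<and> j \<in> {..<n} \<and> p i j > 0}\<^sup>*"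
        by (rule reachlem[OF _ pnn prs]) (use t Feq in auto)
      then show "F $$ (s,t) \<noteq> 0 \<longleftrightarrow> reachable A s t" using s unfolding reachable_def Eq by auto
    qed
    have P2: "invertible_mat (submatrix F Fs Fs) \<and>
         (\<forall>B. is_inverse_mat (submatrix F Fs Fs) B \<longrightarrow>
           (\<forall>s<n. \<forall>t<n. s \<notin> Fs \<longrightarrow> t \<notin> Fs \<longrightarrow>
              ((F $$ (s,t) - (submatrix F {s} Fs * B * submatrix F Fs {t}) $$ (0,0) \<noteq> 0)
               \<longleftrightarrow> reachable_del A Fs s t)))"
      if Fs: "Fs \<subseteq> {..<n}" for Fs
    proof -
      define m where "m = card Fs"
      define q where "q = pick Fs"
      have finFs: "finite Fs" using Fs finite_subset by blast
      have cF: "{i. i < n \<and> i \<in> Fs} = Fs" using Fs by auto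
      have dF: "dim_row F = n" "dim_col F = n" using Fcar by auto
      have cFm: "card {i. i < dim_row F \<and> i \<in> Fs} = m" "card {i. i < dim_col F \<and> i \<in> Fs} = m"
        unfolding dF cF m_def by (rule refl)+
      have FFcar: "submatrix F Fs Fs \<in> carrier_mat m m"
        unfolding carrier_mat_def mem_Collect_eq dim_submatrix cFm by simp
      have FFidx: "submatrix F Fs Fs $$ (i,j) = F $$ (q i, q j)" if "i < m" "j < m" for i j
        unfolding q_def by (rule submatrix_index) (simp_all only: cFm that)
      have qbij: "bij_betw q {..<m} Fs" unfolding q_def m_def by (rule pick_bij[OF finFs])
      have qF: "i < m \<Longrightarrow> q i \<in> Fs" for i using qbij unfolding bij_betw_def by auto
      have qn: "i < m \<Longrightarrow> q i < n" for i using qF Fs by auto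
      have qinj: "i < m \<Longrightarrow> j < m \<Longrightarrow> q i = q j \<longleftrightarrow> i = j" for i j
        using qbij unfolding bij_betw_def inj_on_def by auto
      have qsurj: "a \<in> Fs \<Longrightarrow> \<exists>i<m. q i = a" for a
        using qbij unfolding bij_betw_def by auto
      define V' where "V' = {..<n} - Fs"
      have finV': "finite V'" unfolding V'_def by simp
      have pnn': "\<forall>i\<in>V'. \<forall>j\<in>V'. p i j \<ge> 0" using pnn unfolding V'_def by auto
      have prs': "\<forall>i\<in>V'. (\<Sum>j\<in>V'. p i j) < 1"
      proof
        fix i assume iV: "i \<in> V'"
        have "(\<Sum>j\<in>V'. p i j) \<le> (\<Sum>j\<in>{..<n}. p i j)"
          using pnn iV by (intro sum_mono2) (auto simp: V'_def)
        then show "(\<Sum>j\<in>V'. p i j) < 1" using prs iV unfolding V'_def by force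
      qed
      have invFF: "invertible_mat (submatrix F Fs Fs)"
      proof (rule det_ne0_invertible[OF FFcar])
        fix u :: "real vec" assume u: "u \<in> carrier_vec m" and z0: "submatrix F Fs Fs *\<^sub>v u = 0\<^sub>v m"
        define z where "z k = (\<Sum>j<m. F $$ (k, q j) * u $ j)" for k
        have zF: "z a = 0" if aF: "a \<in> Fs" for a
        proof -
          obtain i where i: "i < m" "q i = a" using qsurj[OF aF] by blast
          have "(submatrix F Fs Fs *\<^sub>v u) $ i = (\<Sum>j<m. F $$ (q i, q j) * u $ j)"
            using multv_idx[OF FFcar u i(1)] FFidx i by simp
          then show ?thesis using z0 i unfolding z_def by simp
        qed
        have zeq: "z k = (\<Sum>j<m. (if k = q j then u $ j else 0)) + (\<Sum>l<n. p k l * z l)" if k: "k < n" for k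
        proof -
          have "z k = (\<Sum>j<m. ((if k = q j then 1 else 0) + (\<Sum>l<n. p k l * F $$ (l, q j))) * u $ j)"
            unfolding z_def using Feq k qn by (intro sum.cong) auto
          also have "\<dots> = (\<Sum>j<m. (if k = q j then u $ j else 0)) + (\<Sum>j<m. (\<Sum>l<n. p k l * F $$ (l, q j)) * u $ j)"
            unfolding sum.distrib[symmetric] by (intro sum.cong) (auto simp: distrib_right)
          also have "(\<Sum>j<m. (\<Sum>l<n. p k l * F $$ (l, q j)) * u $ j) = (\<Sum>l<n. p k l * z l)"
            unfolding z_def by (simp only: sum_distrib_left sum_distrib_right mult.assoc) (rule sum.swap)
          finally show ?thesis .
        qed
        have zV: "\<forall>k\<in>V'. z k = (\<Sum>l\<in>V'. p k l * z l)"
        proof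
          fix k assume kV: "k \<in> V'"
          then have k: "k < n" "k \<notin> Fs" unfolding V'_def by auto
          have s1: "(\<Sum>j<m. (if k = q j then u $ j else 0)) = 0" using qF k(2) by (intro sum.neutral) auto
          have s2: "(\<Sum>l<n. p k l * z l) = (\<Sum>l\<in>V'. p k l * z l)"
            by (rule sum.mono_neutral_right) (auto simp: V'_def zF)
          show "z k = (\<Sum>l\<in>V'. p k l * z l)" using zeq[OF k(1)] s1 s2 by simp
        qed
        have zV0: "\<forall>k\<in>V'. z k = 0" by (rule homprinc[OF finV' pnn' prs' zV])
        have zall: "z k = 0" if "k < n" for k using zF zV0 that unfolding V'_def by blast
        show "u = 0\<^sub>v m"
        proof (rule eq_vecI)
          fix i assume "i < dim_vec (0\<^sub>v m)"
          then have i: "i < m" by simp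
          have "(\<Sum>j<m. (if q i = q j then u $ j else 0)) = (\<Sum>j<m. (if i = j then u $ j else 0))"
            using qinj i by (intro sum.cong) auto
          also have "\<dots> = u $ i" using i by simp
          finally have "z (q i) = u $ i + (\<Sum>l<n. p (q i) l * z l)" using zeq[OF qn[OF i]] by simp
          then show "u $ i = 0\<^sub>v m $ i" using zall qn[OF i] i by simp
        next
          show "dim_vec u = dim_vec (0\<^sub>v m)" using u by simp
        qed
      qed
      have schur: "\<forall>B. is_inverse_mat (submatrix F Fs Fs) B \<longrightarrow>
           (\<forall>s<n. \<forall>t<n. s \<notin> Fs \<longrightarrow> t \<notin> Fs \<longrightarrow>
              ((F $$ (s,t) - (submatrix F {s} Fs * B * submatrix F Fs {t}) $$ (0,0) \<noteq> 0)
               \<longleftrightarrow> reachable_del A Fs s t))"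
      proof (intro allI impI)
        fix B s t assume B: "is_inverse_mat (submatrix F Fs Fs) B" and s: "s < n" and t: "t < n"
          and sF: "s \<notin> Fs" and tF: "t \<notin> Fs"
        have dFF: "dim_row (submatrix F Fs Fs) = m" using FFcar by auto
        have Bcar: "B \<in> carrier_mat m m" and FB: "submatrix F Fs Fs * B = 1\<^sub>m m"
          using B unfolding is_inverse_mat_def dFF by auto
        have FBidx: "(\<Sum>k<m. F $$ (q i, q k) * B $$ (k,j)) = (if i = j then 1 else 0)"
          if ij: "i < m" "j < m" for i j
        proof -
          have "(submatrix F Fs Fs * B) $$ (i,j) = (\<Sum>k<m. submatrix F Fs Fs $$ (i,k) * B $$ (k,j))"
            by (rule mult_idx[OF FFcar Bcar ij])
          also have "\<dots> = (\<Sum>k<m. F $$ (q i, q k) * B $$ (k,j))"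
            using FFidx ij by (intro sum.cong) auto
          finally show ?thesis using FB ij by simp
        qed
        define S where "S k = (\<Sum>i<m. \<Sum>j<m. F $$ (k, q i) * B $$ (i,j) * F $$ (q j, t))" for k
        define y where "y k = F $$ (k,t) - S k" for k
        have cs: "card {i. i < dim_row F \<and> i \<in> {s}} = 1"
        proof -
          have "{i. i < dim_row F \<and> i \<in> {s}} = {s}" using s dF by auto
          then show ?thesis by simp
        qed
        have ct: "card {i. i < dim_col F \<and> i \<in> {t}} = 1"
        proof -
          have "{i. i < dim_col F \<and> i \<in> {t}} = {t}" using t dF by auto
          then show ?thesis by simp
        qed
        have Xcar: "submatrix F {s} Fs \<in> carrier_mat 1 m"
          unfolding carrier_mat_def mem_Collect_eq dim_submatrix cFm cs by simp
        have Ycar: "submatrix F Fs {t} \<in> carrier_mat m 1"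
          unfolding carrier_mat_def mem_Collect_eq dim_submatrix cFm ct by simp
        have ps: "pick {s} 0 = s" by (simp add: Least_equality)
        have pt: "pick {t} 0 = t" by (simp add: Least_equality)
        have Xidx: "submatrix F {s} Fs $$ (0,i) = F $$ (s, q i)" if "i < m" for i
        proof -
          have "submatrix F {s} Fs $$ (0,i) = F $$ (pick {s} 0, pick Fs i)"
            by (rule submatrix_index) (use that cs cFm in auto)
          then show ?thesis unfolding ps q_def .
        qed
        have Yidx: "submatrix F Fs {t} $$ (j,0) = F $$ (q j, t)" if "j < m" for j
        proof -
          have "submatrix F Fs {t} $$ (j,0) = F $$ (pick Fs j, pick {t} 0)"
            by (rule submatrix_index) (use that ct cFm in auto)
          then show ?thesis unfolding pt q_def .
        qed
        have XBcar: "submatrix F {s} Fs * B \<in> carrier_mat 1 m" using Xcar Bcar by simp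
        have prod: "(submatrix F {s} Fs * B * submatrix F Fs {t}) $$ (0,0) = S s"
        proof -
          have "(submatrix F {s} Fs * B * submatrix F Fs {t}) $$ (0,0)
              = (\<Sum>j<m. (submatrix F {s} Fs * B) $$ (0,j) * submatrix F Fs {t} $$ (j,0))"
            by (rule mult_idx[OF XBcar Ycar]) auto
          also have "\<dots> = (\<Sum>j<m. (\<Sum>i<m. F $$ (s, q i) * B $$ (i,j)) * F $$ (q j, t))"
          proof (intro sum.cong refl)
            fix j assume "j \<in> {..<m}"
            then have j: "j < m" by simp
            have "(submatrix F {s} Fs * B) $$ (0,j) = (\<Sum>i<m. submatrix F {s} Fs $$ (0,i) * B $$ (i,j))"
              by (rule mult_idx[OF Xcar Bcar]) (use j in auto)
            also have "\<dots> = (\<Sum>i<m. F $$ (s, q i) * B $$ (i,j))"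
              using Xidx by (intro sum.cong) auto
            finally show "(submatrix F {s} Fs * B) $$ (0,j) * submatrix F Fs {t} $$ (j,0)
                = (\<Sum>i<m. F $$ (s, q i) * B $$ (i,j)) * F $$ (q j, t)" using Yidx j by simp
          qed
          also have "\<dots> = S s" unfolding S_def by (rule double_swap[symmetric])
          finally show ?thesis .
        qed
        have yF: "y a = 0" if aF: "a \<in> Fs" for a
        proof -
          obtain i' where i': "i' < m" "q i' = a" using qsurj[OF aF] by blast
          have "S a = (\<Sum>j<m. (\<Sum>i<m. F $$ (q i', q i) * B $$ (i,j)) * F $$ (q j, t))"
            unfolding S_def i'(2)[symmetric] by (rule double_swap)
          also have "\<dots> = (\<Sum>j<m. (if i' = j then F $$ (q j, t) else 0))"
            using FBidx i' by (intro sum.cong) auto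
          also have "\<dots> = F $$ (a, t)" using i' by simp
          finally show ?thesis unfolding y_def by simp
        qed
        have yeq: "y k = (if k = t then 1 else 0) + (\<Sum>l<n. p k l * y l)" if k: "k < n" "k \<notin> Fs" for k
        proof -
          have Fk: "F $$ (k, q i) = (\<Sum>l<n. p k l * F $$ (l, q i))" if "i < m" for i
            using Feq[OF k(1) qn[OF that]] qF[OF that] k(2) by auto
          have "S k = (\<Sum>i<m. \<Sum>j<m. (\<Sum>l<n. p k l * F $$ (l, q i)) * (B $$ (i,j) * F $$ (q j, t)))"
            unfolding S_def using Fk by (intro sum.cong refl) (simp add: mult.assoc)
          also have "\<dots> = (\<Sum>l<n. p k l * S l)"
            unfolding S_def mult.assoc by (rule triple_swap[symmetric])
          finally have Sk: "S k = (\<Sum>l<n. p k l * S l)" .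
          have "y k = (if k = t then 1 else 0) + (\<Sum>l<n. p k l * F $$ (l,t)) - (\<Sum>l<n. p k l * S l)"
            unfolding y_def using Feq[OF k(1) t] Sk by simp
          also have "\<dots> = (if k = t then 1 else 0) + (\<Sum>l<n. p k l * y l)"
            unfolding y_def by (simp add: right_diff_distrib sum_subtractf)
          finally show ?thesis .
        qed
        have tV: "t \<in> V'" unfolding V'_def using t tF by simp
        have yV: "\<forall>k\<in>V'. y k = (if k = t then 1 else 0) + (\<Sum>l\<in>V'. p k l * y l)"
        proof
          fix k assume "k \<in> V'"
          then have k: "k < n" "k \<notin> Fs" unfolding V'_def by auto
          have "(\<Sum>l<n. p k l * y l) = (\<Sum>l\<in>V'. p k l * y l)"
            by (rule sum.mono_neutral_right) (auto simp: V'_def yF)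
          then show "y k = (if k = t then 1 else 0) + (\<Sum>l\<in>V'. p k l * y l)" using yeq[OF k] by simp
        qed
        have R: "\<forall>s\<in>V'. (y s \<noteq> 0) \<longleftrightarrow> (s,t) \<in> {(i,j). i \<in> V' \<and> j \<in> V' \<and> p i j > 0}\<^sup>*"
          by (rule reachlem[OF finV' pnn' prs' tV yV])
        have EqD: "{(i,j). i \<in> V' \<and> j \<in> V' \<and> p i j > 0} = {(i,j) \<in> edges A. i \<notin> Fs \<and> j \<notin> Fs}"
          unfolding edges_def dA V'_def using ppos by auto
        have sV: "s \<in> V'" unfolding V'_def using s sF by simp
        show "(F $$ (s,t) - (submatrix F {s} Fs * B * submatrix F Fs {t}) $$ (0,0) \<noteq> 0)
               \<longleftrightarrow> reachable_del A Fs s t"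
          using R sV unfolding prod reachable_del_def EqD y_def[symmetric] by blast
      qed
      show ?thesis using invFF schur by blast
    qed
    show ?thesis using P1 P2 by blast
  qed
  show ?thesis using inv part by blast
qed

end
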